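(* Let $G$ be an $l$-group (a topological group with a basis of neighbourhoods of the identity consisting of compact open subgroups), $N\subset G$ a closed normal subgroup, $\chi$ a continuous character of $N$, and $\Gamma\subset G$ a discrete subgroup such that $\chi|_{\Gamma\cap N}\equiv1$, the image of $\Gamma$ in $G/N$ is discrete, and conjugation by $\Gamma$ preserves $\chi$. Let $\chi'$ be the unique character of $\Gamma N$ trivial on $\Gamma$ and extending $\chi$. Then the map of $G$-representations $$\Theta:\operatorname{Ind}_N^G\chi\to\operatorname{Ind}_{\Gamma N}^G\chi',\qquad \Theta(\phi)(g)=\sum_{\gamma\in\Gamma/(\Gamma\cap N)}\phi(\gamma g)$$ is surjective.
   Context: For a closed subgroup $H\subset G$ and a character $\rho$ of $H$, the compactly induced representation $\operatorname{Ind}_H^G\rho$ is the space of locally constant functions $f:G\to\mathbb C$ with $f(hg)=\rho(h)f(g)$ for $h\in H$, $g\in G$, whose support is compact modulo $H$, with $G$ acting by right translation. *)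

theory Defs
  imports "HOL-Analysis.Analysis"
begin

text \<open>Groups are written additively (class group_add is not assumed commutative).
  The ambient group G is the whole type 'g.\<close>

definition is_subgroup :: "'g::group_add set \<Rightarrow> bool" where
  "is_subgroup H \<longleftrightarrow> 0 \<in> H \<and> (\<forall>x\<in>H. \<forall>y\<in>H. x + y \<in> H) \<and> (\<forall>x\<in>H. - x \<in> H)"

definition is_normal_subgroup :: "'g::group_add set \<Rightarrow> bool" where
  "is_normal_subgroup N \<longleftrightarrow> is_subgroup N \<and> (\<forall>g. \<forall>n\<in>N. g + n - g \<in> N)"

definition l_group :: "'g::topological_group_add itself \<Rightarrow> bool" where
  "l_group _ \<longleftrightarrow> (\<forall>U::'g set. open U \<and> 0 \<in> U \<longrightarrow>
       (\<exists>K. is_subgroup K \<and> compact K \<and> open K \<and> K \<subseteq> U))"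

definition character :: "'g::topological_group_add set \<Rightarrow> ('g \<Rightarrow> complex) \<Rightarrow> bool" where
  "character H \<rho> \<longleftrightarrow> continuous_on H \<rho> \<and> (\<forall>h\<in>H. \<rho> h \<noteq> 0) \<and>
      (\<forall>x\<in>H. \<forall>y\<in>H. \<rho> (x + y) = \<rho> x * \<rho> y)"

definition set_plus_grp :: "'g::group_add set \<Rightarrow> 'g set \<Rightarrow> 'g set" where
  "set_plus_grp A B = {a + b | a b. a \<in> A \<and> b \<in> B}"

definition locally_constant :: "('g::topological_space \<Rightarrow> 'b) \<Rightarrow> bool" where
  "locally_constant f \<longleftrightarrow> (\<forall>x. \<exists>U. open U \<and> x \<in> U \<and> (\<forall>y\<in>U. f y = f x))"

definition Ind :: "'g::topological_group_add set \<Rightarrow> ('g \<Rightarrow> complex) \<Rightarrow> ('g \<Rightarrow> complex) set" where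
  "Ind H \<rho> = {f. locally_constant f \<and> (\<forall>h\<in>H. \<forall>g. f (h + g) = \<rho> h * f g) \<and>
      (\<exists>C. compact C \<and> {x. f x \<noteq> 0} \<subseteq> set_plus_grp H C)}"

definition coset_of :: "'g::group_add set \<Rightarrow> 'g \<Rightarrow> 'g set" where
  "coset_of N x = (\<lambda>n. x + n) ` N"

text \<open>The image of \<Gamma> in G/N is discrete, where G/N carries the quotient topology
  (a set of cosets is open iff its union is open in G).\<close>
definition discrete_image_mod :: "'g::topological_group_add set \<Rightarrow> 'g set \<Rightarrow> bool" where
  "discrete_image_mod N \<Gamma> \<longleftrightarrow> (\<forall>\<gamma>\<in>\<Gamma>. \<exists>U. U \<subseteq> range (coset_of N) \<and> open (\<Union>U) \<and>
      U \<inter> coset_of N ` \<Gamma> = {coset_of N \<gamma>})"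

definition Theta :: "'g::topological_group_add set \<Rightarrow> 'g set \<Rightarrow> ('g \<Rightarrow> complex) \<Rightarrow> 'g \<Rightarrow> complex" where
  "Theta N \<Gamma> \<phi> g = (\<Sum>\<^sub>\<infinity>C \<in> coset_of (\<Gamma> \<inter> N) ` \<Gamma>. \<phi> ((SOME \<gamma>. \<gamma> \<in> C) + g))"

end

theory Submission
  imports Defs
begin


definition rep :: "'a set \<Rightarrow> 'a" where "rep C = (SOME x. x \<in> C)"

lemma Theta_alt: "Theta N \<Gamma> \<phi> g = (\<Sum>\<^sub>\<infinity>C \<in> coset_of (\<Gamma> \<inter> N) ` \<Gamma>. \<phi> (rep C + g))"
  by (simp add: Theta_def rep_def)

lemma sg0: "is_subgroup H \<Longrightarrow> 0 \<in> H" unfolding is_subgroup_def by blast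
lemma sgadd: "is_subgroup H \<Longrightarrow> x \<in> H \<Longrightarrow> y \<in> H \<Longrightarrow> x + y \<in> H" unfolding is_subgroup_def by blast
lemma sgminus: "is_subgroup H \<Longrightarrow> x \<in> H \<Longrightarrow> - x \<in> H" unfolding is_subgroup_def by blast
lemma sgdiff: "is_subgroup H \<Longrightarrow> x \<in> H \<Longrightarrow> y \<in> H \<Longrightarrow> x - y \<in> H"
  unfolding diff_conv_add_uminus by (intro sgadd sgminus)
lemma sg_int: "is_subgroup A \<Longrightarrow> is_subgroup B \<Longrightarrow> is_subgroup (A \<inter> B)"
  unfolding is_subgroup_def by blast

lemma nconj: "is_normal_subgroup N \<Longrightarrow> n \<in> N \<Longrightarrow> g + n - g \<in> N"
  unfolding is_normal_subgroup_def by blast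
lemma nconj': "is_normal_subgroup N \<Longrightarrow> n \<in> N \<Longrightarrow> - g + n + g \<in> N"
  using nconj[of N n "-g"] by (simp add: diff_conv_add_uminus)
lemma nsg: "is_normal_subgroup N \<Longrightarrow> is_subgroup N"
  unfolding is_normal_subgroup_def by blast

lemma coset_mem: "is_subgroup H \<Longrightarrow> x \<in> coset_of H x"
  unfolding coset_of_def by (rule rev_image_eqI[OF sg0]) simp_all

lemma coset_eqI: "is_subgroup H \<Longrightarrow> - x + y \<in> H \<Longrightarrow> coset_of H x = coset_of H y"
proof -
  assume H: "is_subgroup H" and m: "- x + y \<in> H"
  show ?thesis unfolding coset_of_def
  proof (intro set_eqI iffI)
    fix z assume "z \<in> (+) x ` H"
    then obtain h where h: "h \<in> H" "z = x + h" by auto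
    have "z = y + (- (- x + y) + h)" using h by (simp add: minus_add add.assoc)
    moreover have "- (- x + y) + h \<in> H" using sgadd[OF H sgminus[OF H m] h(1)] .
    ultimately show "z \<in> (+) y ` H" by (rule rev_image_eqI[rotated])
  next
    fix z assume "z \<in> (+) y ` H"
    then obtain h where h: "h \<in> H" "z = y + h" by auto
    have "z = x + ((- x + y) + h)" using h by (simp add: add.assoc[symmetric])
    moreover have "(- x + y) + h \<in> H" using sgadd[OF H m h(1)] .
    ultimately show "z \<in> (+) x ` H" by (rule rev_image_eqI[rotated])
  qed
qed

lemma coset_memD: "x \<in> coset_of H y \<Longrightarrow> \<exists>h\<in>H. x = y + h"
  unfolding coset_of_def by auto

lemma coset_of_mem: "is_subgroup H \<Longrightarrow> x \<in> coset_of H y \<Longrightarrow> coset_of H x = coset_of H y"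
  by (metis coset_eqI coset_memD add_minus_cancel sgminus)

lemma rep_mem: "is_subgroup H \<Longrightarrow> rep (coset_of H x) \<in> coset_of H x"
  unfolding rep_def by (rule someI_ex) (use coset_mem in blast)

lemma rep_coset: "is_subgroup H \<Longrightarrow> \<exists>h\<in>H. rep (coset_of H x) = x + h"
  using rep_mem coset_memD by blast

lemma coset_rep: "is_subgroup H \<Longrightarrow> coset_of H (rep (coset_of H x)) = coset_of H x"
  using rep_mem coset_of_mem by blast

lemma set_plus_grpI: "a \<in> A \<Longrightarrow> b \<in> B \<Longrightarrow> a + b \<in> set_plus_grp A B"
  unfolding set_plus_grp_def by blast

lemma set_plus_grpE: "x \<in> set_plus_grp A B \<Longrightarrow> (\<And>a b. a \<in> A \<Longrightarrow> b \<in> B \<Longrightarrow> x = a + b \<Longrightarrow> P) \<Longrightarrow> P"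
  unfolding set_plus_grp_def by blast

lemma set_plus_grp_image: "set_plus_grp A B = (\<lambda>p. fst p + snd p) ` (A \<times> B)"
  unfolding set_plus_grp_def by force

lemma compact_set_plus:
  fixes A B :: "'g::topological_group_add set"
  shows "compact A \<Longrightarrow> compact B \<Longrightarrow> compact (set_plus_grp A B)"
  unfolding set_plus_grp_image
  by (intro compact_continuous_image compact_Times continuous_intros) auto

lemma compact_translate:
  fixes A :: "'g::topological_group_add set"
  shows "compact A \<Longrightarrow> compact ((\<lambda>x. a + x) ` A)"
  by (intro compact_continuous_image continuous_intros) auto

lemma compact_uminus:
  fixes A :: "'g::topological_group_add set"
  shows "compact A \<Longrightarrow> compact (uminus ` A)"
  by (intro compact_continuous_image continuous_intros) auto

lemma open_translate:
  fixes A :: "'g::topological_group_add set"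
  assumes "open A" shows "open ((\<lambda>x. a + x) ` A)"
proof -
  have "(\<lambda>x. a + x) ` A = (\<lambda>x. - a + x) -` A"
  proof (intro set_eqI iffI)
    fix x assume "x \<in> (\<lambda>x. - a + x) -` A"
    then have "- a + x \<in> A" by simp
    moreover have "x = a + (- a + x)" by (simp add: add.assoc[symmetric])
    ultimately show "x \<in> (\<lambda>x. a + x) ` A" by (rule rev_image_eqI)
  next
    fix x assume "x \<in> (\<lambda>x. a + x) ` A"
    then obtain y where "y \<in> A" "x = a + y" by blast
    then show "x \<in> (\<lambda>x. - a + x) -` A" by (simp add: add.assoc[symmetric])
  qed
  moreover have "open ((\<lambda>x. - a + x) -` A)"
    by (intro open_vimage assms continuous_intros)
  ultimately show ?thesis by simp
qed

lemma open_translate_vimage: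
  fixes A :: "'g::topological_group_add set"
  assumes "open A" shows "open ((\<lambda>x. a + x) -` A)"
  by (intro open_vimage assms continuous_intros)



locale thsetup =
  fixes N \<Gamma> :: "'g::topological_group_add set"
  assumes lg: "l_group TYPE('g)"
    and Nn: "is_normal_subgroup N"
    and Gs: "is_subgroup \<Gamma>"
    and dim: "discrete_image_mod N \<Gamma>"
begin

lemma Ns: "is_subgroup N" using Nn nsg by blast
lemma Hs: "is_subgroup (\<Gamma> \<inter> N)" using sg_int[OF Gs Ns] .

lemma repI:
  assumes "C \<in> coset_of (\<Gamma> \<inter> N) ` \<Gamma>"
  shows "rep C \<in> \<Gamma>" "coset_of (\<Gamma> \<inter> N) (rep C) = C"
proof -
  obtain x where x: "x \<in> \<Gamma>" "C = coset_of (\<Gamma> \<inter> N) x" using assms by blast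
  obtain h where h: "h \<in> \<Gamma> \<inter> N" "rep C = x + h" using rep_coset[OF Hs, of x] x by blast
  have "h \<in> \<Gamma>" using h(1) by (rule IntD1)
  show "rep C \<in> \<Gamma>" unfolding h(2) by (rule sgadd[OF Gs x(1) \<open>h \<in> \<Gamma>\<close>])
  show "coset_of (\<Gamma> \<inter> N) (rep C) = C" unfolding x(2) by (rule coset_rep[OF Hs])
qed

lemma coset_shift:
  assumes "C \<in> coset_of (\<Gamma> \<inter> N) ` \<Gamma>" "h \<in> \<Gamma> \<inter> N"
  shows "coset_of (\<Gamma> \<inter> N) (rep C + h) = C"
proof -
  have "- rep C + (rep C + h) \<in> \<Gamma> \<inter> N" unfolding minus_add_cancel by (rule assms(2))
  then have "coset_of (\<Gamma> \<inter> N) (rep C) = coset_of (\<Gamma> \<inter> N) (rep C + h)"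
    by (rule coset_eqI[OF Hs])
  then show ?thesis using repI(2)[OF assms(1)] by simp
qed

lemma sep: "\<exists>V. is_subgroup V \<and> open V \<and> (\<forall>\<gamma>\<in>\<Gamma>. \<gamma> \<in> set_plus_grp N V \<longrightarrow> \<gamma> \<in> N)"
proof -
  have "0 \<in> \<Gamma>" using sg0[OF Gs] .
  have "\<exists>U. U \<subseteq> range (coset_of N) \<and> open (\<Union>U) \<and> U \<inter> coset_of N ` \<Gamma> = {coset_of N 0}"
    using dim \<open>0 \<in> \<Gamma>\<close> unfolding discrete_image_mod_def by (rule bspec)
  then obtain U where U: "U \<subseteq> range (coset_of N)" "open (\<Union>U)"
      "U \<inter> coset_of N ` \<Gamma> = {coset_of N 0}" by blast
  have c0: "coset_of N 0 \<in> U" using U(3) by blast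
  have "0 \<in> \<Union>U" using c0 coset_mem[OF Ns, of 0] by blast
  then obtain K where K: "is_subgroup K" "open K" "K \<subseteq> \<Union>U"
    using lg U(2) unfolding l_group_def by blast
  have "\<forall>\<gamma>\<in>\<Gamma>. \<gamma> \<in> set_plus_grp N K \<longrightarrow> \<gamma> \<in> N"
  proof (intro ballI impI)
    fix \<gamma> assume g: "\<gamma> \<in> \<Gamma>" "\<gamma> \<in> set_plus_grp N K"
    then obtain n v where nv: "n \<in> N" "v \<in> K" "\<gamma> = n + v" by (elim set_plus_grpE)
    then obtain X where X: "X \<in> U" "v \<in> X" using K by blast
    then obtain y where y: "X = coset_of N y" using U(1) by blast
    have cv: "coset_of N v = X" using coset_of_mem[OF Ns] X y by blast
    have e: "\<gamma> = v + (- v + n + v)" using nv by (simp add: add.assoc)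
    have "- v + n + v \<in> N" using nconj'[OF Nn nv(1)] .
    then have "\<gamma> \<in> coset_of N v" unfolding coset_of_def using e by (rule rev_image_eqI)
    then have "coset_of N \<gamma> = X" using coset_of_mem[OF Ns] cv by blast
    then have "coset_of N \<gamma> \<in> U \<inter> coset_of N ` \<Gamma>" using X g by blast
    then have "coset_of N \<gamma> = coset_of N 0" using U(3) by blast
    then have "\<gamma> \<in> coset_of N 0" using coset_mem[OF Ns, of \<gamma>] by (rule subst)
    then obtain m where "m \<in> N" "\<gamma> = 0 + m" using coset_memD by blast
    then show "\<gamma> \<in> N" by simp
  qed
  then show ?thesis using K by blast
qed

lemma fin:
  assumes V: "is_subgroup V" "open V" "\<forall>\<gamma>\<in>\<Gamma>. \<gamma> \<in> set_plus_grp N V \<longrightarrow> \<gamma> \<in> N"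
    and D: "compact D"
  shows "finite {C \<in> coset_of (\<Gamma> \<inter> N) ` \<Gamma>. rep C \<in> set_plus_grp N D}"
proof -
  let ?S = "{C \<in> coset_of (\<Gamma> \<inter> N) ` \<Gamma>. rep C \<in> set_plus_grp N D}"
  have "D \<subseteq> (\<Union>d\<in>D. (\<lambda>x. d + x) ` V)"
  proof
    fix d assume "d \<in> D"
    moreover have "d \<in> (\<lambda>x. d + x) ` V" using sg0[OF V(1)] by (rule rev_image_eqI) simp
    ultimately show "d \<in> (\<Union>d\<in>D. (\<lambda>x. d + x) ` V)" by blast
  qed
  then obtain E where E: "E \<subseteq> D" "finite E" "D \<subseteq> (\<Union>e\<in>E. (\<lambda>x. e + x) ` V)"
    using compactE_image[OF D, where f="\<lambda>d. (\<lambda>x. d + x) ` V" and C=D] open_translate[OF V(2)] by metis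
  define sel where "sel C = (SOME e. e \<in> E \<and> rep C \<in> set_plus_grp N ((\<lambda>x. e + x) ` V))" for C
  have selP: "sel C \<in> E \<and> rep C \<in> set_plus_grp N ((\<lambda>x. sel C + x) ` V)" if "C \<in> ?S" for C
  proof -
    from that have "rep C \<in> set_plus_grp N D" by blast
    then obtain n d where nd: "n \<in> N" "d \<in> D" "rep C = n + d" by (elim set_plus_grpE)
    then obtain e where e: "e \<in> E" "d \<in> (\<lambda>x. e + x) ` V" using E(3) by blast
    then have "rep C \<in> set_plus_grp N ((\<lambda>x. e + x) ` V)" unfolding nd(3) by (intro set_plus_grpI nd(1))
    then have "\<exists>e. e \<in> E \<and> rep C \<in> set_plus_grp N ((\<lambda>x. e + x) ` V)" using e by blast
    then show ?thesis unfolding sel_def by (rule someI_ex)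
  qed
  have "inj_on sel ?S"
  proof (rule inj_onI)
    fix C1 C2 assume C1: "C1 \<in> ?S" and C2: "C2 \<in> ?S" and eq: "sel C1 = sel C2"
    define e where "e = sel C1"
    have "rep C1 \<in> set_plus_grp N ((\<lambda>x. e + x) ` V)" using selP[OF C1] unfolding e_def by blast
    then obtain n1 v1 where 1: "n1 \<in> N" "v1 \<in> V" "rep C1 = n1 + (e + v1)"
      by (elim set_plus_grpE imageE) simp
    have "rep C2 \<in> set_plus_grp N ((\<lambda>x. e + x) ` V)" using selP[OF C2] eq unfolding e_def by simp
    then obtain n2 v2 where 2: "n2 \<in> N" "v2 \<in> V" "rep C2 = n2 + (e + v2)"
      by (elim set_plus_grpE imageE) simp
    have alg: "- rep C1 + rep C2 = (- v1 + (- e + (- n1 + n2) + e) + v1) + (- v1 + v2)"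
      unfolding 1 2 by (simp add: minus_add add.assoc diff_conv_add_uminus del: add_uminus_conv_diff)
    have "- n1 + n2 \<in> N" using sgadd[OF Ns sgminus[OF Ns 1(1)] 2(1)] .
    then have "- e + (- n1 + n2) + e \<in> N" by (rule nconj'[OF Nn])
    then have nn: "- v1 + (- e + (- n1 + n2) + e) + v1 \<in> N" by (rule nconj'[OF Nn])
    have vv: "- v1 + v2 \<in> V" using sgadd[OF V(1) sgminus[OF V(1) 1(2)] 2(2)] .
    have C1I: "C1 \<in> coset_of (\<Gamma> \<inter> N) ` \<Gamma>" using C1 by blast
    have C2I: "C2 \<in> coset_of (\<Gamma> \<inter> N) ` \<Gamma>" using C2 by blast
    have sp: "- rep C1 + rep C2 \<in> set_plus_grp N V" unfolding alg using nn vv by (rule set_plus_grpI)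
    have gg: "- rep C1 + rep C2 \<in> \<Gamma>"
      using sgadd[OF Gs sgminus[OF Gs repI(1)[OF C1I]] repI(1)[OF C2I]] .
    have "- rep C1 + rep C2 \<in> \<Gamma> \<inter> N" using V(3)[rule_format, OF gg sp] gg by (rule IntI[rotated])
    then have "coset_of (\<Gamma> \<inter> N) (rep C1) = coset_of (\<Gamma> \<inter> N) (rep C2)" by (rule coset_eqI[OF Hs])
    then show "C1 = C2" using repI(2)[OF C1I] repI(2)[OF C2I] by simp
  qed
  moreover have "sel ` ?S \<subseteq> E" using selP by blast
  ultimately show ?thesis using E(2) inj_on_finite by blast
qed

end


context thsetup
begin

lemma conjH: "a \<in> \<Gamma> \<Longrightarrow> h \<in> \<Gamma> \<inter> N \<Longrightarrow> a + h + - a \<in> \<Gamma> \<inter> N"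
proof -
  assume a: "a \<in> \<Gamma>" and h: "h \<in> \<Gamma> \<inter> N"
  have hG: "h \<in> \<Gamma>" and hN: "h \<in> N" using h by auto
  have "a + h + - a \<in> \<Gamma>" by (intro sgadd[OF Gs] sgminus[OF Gs] a hG)
  moreover have "a + h - a \<in> N" by (rule nconj[OF Nn hN])
  then have "a + h + - a \<in> N" by (simp only: diff_conv_add_uminus)
  ultimately show ?thesis by (rule IntI)
qed

lemma Theta_in_Ind:
  fixes chi chi' :: "'g \<Rightarrow> complex" and \<phi> :: "'g \<Rightarrow> complex"
  assumes chiH: "\<forall>x\<in>\<Gamma> \<inter> N. chi x = 1"
    and chiconj: "\<forall>\<gamma>\<in>\<Gamma>. \<forall>n\<in>N. chi (\<gamma> + n - \<gamma>) = chi n"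
    and chi'mult: "\<forall>x\<in>set_plus_grp \<Gamma> N. \<forall>y\<in>set_plus_grp \<Gamma> N. chi' (x + y) = chi' x * chi' y"
    and chi'G: "\<forall>\<gamma>\<in>\<Gamma>. chi' \<gamma> = 1"
    and chi'N: "\<forall>n\<in>N. chi' n = chi n"
    and phi: "\<phi> \<in> Ind N chi"
  shows "Theta N \<Gamma> \<phi> \<in> Ind (set_plus_grp \<Gamma> N) chi'"
proof -
  have lc: "locally_constant \<phi>" using phi unfolding Ind_def by blast
  have eqv: "\<And>n g. n \<in> N \<Longrightarrow> \<phi> (n + g) = chi n * \<phi> g"
    using phi unfolding Ind_def by blast
  obtain C0 where C0: "compact C0" "{x. \<phi> x \<noteq> 0} \<subseteq> set_plus_grp N C0"
    using phi unfolding Ind_def by blast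
  obtain V where V: "is_subgroup V" "open V" "\<forall>\<gamma>\<in>\<Gamma>. \<gamma> \<in> set_plus_grp N V \<longrightarrow> \<gamma> \<in> N"
    using sep by blast
  let ?I = "coset_of (\<Gamma> \<inter> N) ` \<Gamma>"
  define F where "F Kc = {C \<in> ?I. rep C \<in> set_plus_grp N (set_plus_grp C0 (uminus ` Kc))}" for Kc
  have Ffin: "finite (F Kc)" if "compact Kc" for Kc
    unfolding F_def by (rule fin[OF V]) (intro compact_set_plus compact_uminus C0(1) that)
  have Fsub: "F Kc \<subseteq> ?I" for Kc unfolding F_def by blast
  have van: "\<phi> (rep C + g) = 0" if "g \<in> Kc" "C \<in> ?I" "C \<notin> F Kc" for Kc g C
  proof (rule ccontr)
    assume "\<phi> (rep C + g) \<noteq> 0"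
    then have "rep C + g \<in> set_plus_grp N C0" using C0(2) by blast
    then obtain n c where nc: "n \<in> N" "c \<in> C0" "rep C + g = n + c" by (elim set_plus_grpE)
    have e: "rep C = n + (c + - g)"
    proof -
      have "rep C = (rep C + g) + - g" by (simp only: add.assoc add_minus_cancel right_minus add_0_right)
      also have "\<dots> = n + (c + - g)" unfolding nc(3) by (simp only: add.assoc)
      finally show ?thesis .
    qed
    have "c + - g \<in> set_plus_grp C0 (uminus ` Kc)"
      using nc(2) imageI[OF that(1), of uminus] by (rule set_plus_grpI)
    then have "rep C \<in> set_plus_grp N (set_plus_grp C0 (uminus ` Kc))"
      unfolding e by (rule set_plus_grpI[OF nc(1)])
    then show False using that(2,3) unfolding F_def by blast
  qed
  have Tfin: "Theta N \<Gamma> \<phi> g = (\<Sum>C\<in>F Kc. \<phi> (rep C + g))" if "compact Kc" "g \<in> Kc" for Kc g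
  proof -
    have "Theta N \<Gamma> \<phi> g = (\<Sum>\<^sub>\<infinity>C\<in>?I. \<phi> (rep C + g))" by (rule Theta_alt)
    also have "\<dots> = (\<Sum>\<^sub>\<infinity>C\<in>F Kc. \<phi> (rep C + g))"
    proof (rule infsum_cong_neutral)
      fix C assume "C \<in> F Kc - ?I" then show "\<phi> (rep C + g) = 0" using Fsub by blast
    next
      fix C assume "C \<in> ?I - F Kc" then show "\<phi> (rep C + g) = 0" using van[OF that(2)] by blast
    qed simp
    also have "\<dots> = (\<Sum>C\<in>F Kc. \<phi> (rep C + g))" using Ffin[OF that(1)] by (rule infsum_finite)
    finally show ?thesis .
  qed

  have LC: "locally_constant (Theta N \<Gamma> \<phi>)"
    unfolding locally_constant_def
  proof
    fix g
    have "\<exists>K::'g set. is_subgroup K \<and> compact K \<and> open K \<and> K \<subseteq> UNIV"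
      using lg[unfolded l_group_def, rule_format, of UNIV] by simp
    then obtain K :: "'g set" where K: "is_subgroup K" "compact K" "open K" by blast
    let ?Kc = "(\<lambda>x. g + x) ` K"
    have Kc1: "compact ?Kc" by (rule compact_translate[OF K(2)])
    have Kc2: "open ?Kc" by (rule open_translate[OF K(3)])
    have Kc3: "g \<in> ?Kc" by (rule rev_image_eqI[OF sg0[OF K(1)]]) simp
    have "\<forall>C\<in>F ?Kc. \<exists>U. open U \<and> rep C + g \<in> U \<and> (\<forall>y\<in>U. \<phi> y = \<phi> (rep C + g))"
      using lc unfolding locally_constant_def by blast
    then obtain Uf where Uf: "\<forall>C\<in>F ?Kc. open (Uf C) \<and> rep C + g \<in> Uf C \<and> (\<forall>y\<in>Uf C. \<phi> y = \<phi> (rep C + g))"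
      by (rule bchoice[THEN exE]) blast
    let ?W = "?Kc \<inter> (\<Inter>C\<in>F ?Kc. (\<lambda>x. rep C + x) -` Uf C)"
    have "open ?W"
    proof (rule open_Int[OF Kc2], rule open_INT[OF Ffin[OF Kc1]], rule ballI)
      fix C assume "C \<in> F ?Kc"
      then have "open (Uf C)" using Uf by blast
      then show "open ((\<lambda>x. rep C + x) -` Uf C)" by (rule open_translate_vimage)
    qed
    moreover have "g \<in> ?W" using Kc3 Uf by blast
    moreover have "\<forall>y\<in>?W. Theta N \<Gamma> \<phi> y = Theta N \<Gamma> \<phi> g"
    proof
      fix y assume y: "y \<in> ?W"
      have "Theta N \<Gamma> \<phi> y = (\<Sum>C\<in>F ?Kc. \<phi> (rep C + y))" using y by (intro Tfin[OF Kc1]) blast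
      also have "\<dots> = (\<Sum>C\<in>F ?Kc. \<phi> (rep C + g))"
      proof (rule sum.cong[OF refl])
        fix C assume C: "C \<in> F ?Kc"
        then have "rep C + y \<in> Uf C" using y by blast
        then show "\<phi> (rep C + y) = \<phi> (rep C + g)" using Uf C by blast
      qed
      also have "\<dots> = Theta N \<Gamma> \<phi> g" using Tfin[OF Kc1 Kc3] by simp
      finally show "Theta N \<Gamma> \<phi> y = Theta N \<Gamma> \<phi> g" .
    qed
    ultimately show "\<exists>U. open U \<and> g \<in> U \<and> (\<forall>y\<in>U. Theta N \<Gamma> \<phi> y = Theta N \<Gamma> \<phi> g)" by blast
  qed

  have Neq: "Theta N \<Gamma> \<phi> (n + g) = chi n * Theta N \<Gamma> \<phi> g" if n: "n \<in> N" for n g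
  proof -
    have "Theta N \<Gamma> \<phi> (n + g) = (\<Sum>\<^sub>\<infinity>C\<in>?I. chi n * \<phi> (rep C + g))"
      unfolding Theta_alt
    proof (rule infsum_cong)
      fix C assume C: "C \<in> ?I"
      have r: "rep C \<in> \<Gamma>" using repI(1)[OF C] .
      have m: "rep C + n - rep C \<in> N" using nconj[OF Nn n] .
      have "rep C + (n + g) = (rep C + n - rep C) + (rep C + g)"
        by (simp add: add.assoc diff_conv_add_uminus del: add_uminus_conv_diff)
      then have "\<phi> (rep C + (n + g)) = chi (rep C + n - rep C) * \<phi> (rep C + g)" using eqv[OF m] by simp
      also have "\<dots> = chi n * \<phi> (rep C + g)" using chiconj r n by simp
      finally show "\<phi> (rep C + (n + g)) = chi n * \<phi> (rep C + g)" .
    qed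
    also have "\<dots> = chi n * Theta N \<Gamma> \<phi> g" unfolding Theta_alt by (rule infsum_cmult_right')
    finally show ?thesis .
  qed

  have Geq: "Theta N \<Gamma> \<phi> (\<gamma>0 + g) = Theta N \<Gamma> \<phi> g" if g0: "\<gamma>0 \<in> \<Gamma>" for \<gamma>0 g
  proof -
    define \<sigma> where "\<sigma> C = coset_of (\<Gamma> \<inter> N) (rep C + \<gamma>0)" for C
    define \<tau> where "\<tau> C = coset_of (\<Gamma> \<inter> N) (rep C + - \<gamma>0)" for C
    have mg: "- \<gamma>0 \<in> \<Gamma>" using sgminus[OF Gs g0] .
    have st: "\<tau> (\<sigma> C) = C" if C: "C \<in> ?I" for C
    proof -
      obtain h where h: "h \<in> \<Gamma> \<inter> N" "rep (\<sigma> C) = rep C + \<gamma>0 + h"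
        using rep_coset[OF Hs] unfolding \<sigma>_def by blast
      have "\<tau> (\<sigma> C) = coset_of (\<Gamma> \<inter> N) (rep C + (\<gamma>0 + h + - \<gamma>0))"
        unfolding \<tau>_def h(2) by (simp only: add.assoc)
      also have "\<dots> = C" by (rule coset_shift[OF C conjH[OF g0 h(1)]])
      finally show ?thesis .
    qed
    have ts: "\<sigma> (\<tau> C) = C" if C: "C \<in> ?I" for C
    proof -
      obtain h where h: "h \<in> \<Gamma> \<inter> N" "rep (\<tau> C) = rep C + - \<gamma>0 + h"
        using rep_coset[OF Hs] unfolding \<tau>_def by blast
      have "\<sigma> (\<tau> C) = coset_of (\<Gamma> \<inter> N) (rep C + (- \<gamma>0 + h + - (- \<gamma>0)))"
        unfolding \<sigma>_def h(2) by (simp only: add.assoc minus_minus)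
      also have "\<dots> = C" by (rule coset_shift[OF C conjH[OF mg h(1)]])
      finally show ?thesis .
    qed
    have sI: "\<sigma> ` ?I \<subseteq> ?I"
    proof
      fix D assume "D \<in> \<sigma> ` ?I"
      then obtain C where C: "C \<in> ?I" "D = \<sigma> C" by blast
      have "rep C + \<gamma>0 \<in> \<Gamma>" using sgadd[OF Gs repI(1)[OF C(1)] g0] .
      then show "D \<in> ?I" unfolding C(2) \<sigma>_def by (rule imageI)
    qed
    have tI: "\<tau> ` ?I \<subseteq> ?I"
    proof
      fix D assume "D \<in> \<tau> ` ?I"
      then obtain C where C: "C \<in> ?I" "D = \<tau> C" by blast
      have "rep C + - \<gamma>0 \<in> \<Gamma>" using sgadd[OF Gs repI(1)[OF C(1)] mg] .
      then show "D \<in> ?I" unfolding C(2) \<tau>_def by (rule imageI)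
    qed
    have bij: "bij_betw \<sigma> ?I ?I"
      by (rule bij_betw_byWitness[where f'=\<tau>]) (use st ts sI tI in auto)
    have "Theta N \<Gamma> \<phi> (\<gamma>0 + g) = (\<Sum>\<^sub>\<infinity>C\<in>?I. \<phi> (rep (\<sigma> C) + g))"
      unfolding Theta_alt
    proof (rule infsum_cong)
      fix C assume C: "C \<in> ?I"
      have r: "rep C + \<gamma>0 \<in> \<Gamma>" using sgadd[OF Gs repI(1)[OF C] g0] .
      obtain h where h: "h \<in> \<Gamma> \<inter> N" "rep (\<sigma> C) = rep C + \<gamma>0 + h"
        using rep_coset[OF Hs] unfolding \<sigma>_def by blast
      have hh: "rep C + \<gamma>0 + h + - (rep C + \<gamma>0) \<in> \<Gamma> \<inter> N" by (rule conjH[OF r h(1)])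
      have "\<phi> (rep (\<sigma> C) + g) = \<phi> ((rep C + \<gamma>0 + h + - (rep C + \<gamma>0)) + (rep C + (\<gamma>0 + g)))"
        unfolding h(2) by (simp add: add.assoc minus_add diff_conv_add_uminus del: add_uminus_conv_diff)
      also have "\<dots> = chi (rep C + \<gamma>0 + h + - (rep C + \<gamma>0)) * \<phi> (rep C + (\<gamma>0 + g))"
        using hh by (intro eqv) blast
      also have "\<dots> = \<phi> (rep C + (\<gamma>0 + g))" using chiH hh by simp
      finally show "\<phi> (rep C + (\<gamma>0 + g)) = \<phi> (rep (\<sigma> C) + g)" by simp
    qed
    also have "\<dots> = (\<Sum>\<^sub>\<infinity>C\<in>?I. \<phi> (rep C + g))" by (rule infsum_reindex_bij_betw[OF bij])
    finally show ?thesis unfolding Theta_alt .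
  qed

  have GNeq: "\<forall>h\<in>set_plus_grp \<Gamma> N. \<forall>g. Theta N \<Gamma> \<phi> (h + g) = chi' h * Theta N \<Gamma> \<phi> g"
  proof (intro ballI allI)
    fix h g assume "h \<in> set_plus_grp \<Gamma> N"
    then obtain \<gamma>0 n where a: "\<gamma>0 \<in> \<Gamma>" "n \<in> N" "h = \<gamma>0 + n" by (elim set_plus_grpE)
    have x1: "\<gamma>0 \<in> set_plus_grp \<Gamma> N" using set_plus_grpI[OF a(1) sg0[OF Ns]] by simp
    have x2: "n \<in> set_plus_grp \<Gamma> N" using set_plus_grpI[OF sg0[OF Gs] a(2)] by simp
    have ch: "chi' h = chi n" unfolding a(3) chi'mult[rule_format, OF x1 x2]
      using chi'G a(1) chi'N a(2) by simp
    have "Theta N \<Gamma> \<phi> (h + g) = Theta N \<Gamma> \<phi> (\<gamma>0 + (n + g))" unfolding a(3) by (simp only: add.assoc)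
    also have "\<dots> = Theta N \<Gamma> \<phi> (n + g)" by (rule Geq[OF a(1)])
    also have "\<dots> = chi n * Theta N \<Gamma> \<phi> g" by (rule Neq[OF a(2)])
    finally show "Theta N \<Gamma> \<phi> (h + g) = chi' h * Theta N \<Gamma> \<phi> g" unfolding ch .
  qed

  have supp: "{x. Theta N \<Gamma> \<phi> x \<noteq> 0} \<subseteq> set_plus_grp (set_plus_grp \<Gamma> N) C0"
  proof
    fix g assume "g \<in> {x. Theta N \<Gamma> \<phi> x \<noteq> 0}"
    then have "(\<Sum>C\<in>F {g}. \<phi> (rep C + g)) \<noteq> 0" using Tfin[of "{g}" g] by simp
    then obtain C where C: "C \<in> F {g}" "\<phi> (rep C + g) \<noteq> 0" by (meson sum.neutral)
    then have CI: "C \<in> ?I" using Fsub by blast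
    have "rep C + g \<in> set_plus_grp N C0" using C0(2) C(2) by blast
    then obtain n c where nc: "n \<in> N" "c \<in> C0" "rep C + g = n + c" by (elim set_plus_grpE)
    have e: "g = (- rep C + n) + c"
    proof -
      have "g = - rep C + (rep C + g)" by (simp only: minus_add_cancel)
      also have "\<dots> = (- rep C + n) + c" unfolding nc(3) by (simp only: add.assoc)
      finally show ?thesis .
    qed
    have "- rep C + n \<in> set_plus_grp \<Gamma> N" by (rule set_plus_grpI[OF sgminus[OF Gs repI(1)[OF CI]] nc(1)])
    then show "g \<in> set_plus_grp (set_plus_grp \<Gamma> N) C0" unfolding e using nc(2) by (rule set_plus_grpI)
  qed
  show ?thesis unfolding Ind_def using LC GNeq C0(1) supp by blast
qed

end


lemma lc2:
  assumes "locally_constant f" "locally_constant g"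
  shows "locally_constant (\<lambda>x. h (f x) (g x))"
  unfolding locally_constant_def
proof
  fix x
  obtain U where U: "open U" "x \<in> U" "\<forall>y\<in>U. f y = f x" using assms(1) unfolding locally_constant_def by blast
  obtain W where W: "open W" "x \<in> W" "\<forall>y\<in>W. g y = g x" using assms(2) unfolding locally_constant_def by blast
  have "open (U \<inter> W)" using U(1) W(1) by (rule open_Int)
  moreover have "x \<in> U \<inter> W" using U(2) W(2) by (rule IntI)
  moreover have "\<forall>y\<in>U \<inter> W. h (f y) (g y) = h (f x) (g x)" using U(3) W(3) by simp
  ultimately show "\<exists>U. open U \<and> x \<in> U \<and> (\<forall>y\<in>U. h (f y) (g y) = h (f x) (g x))" by blast
qed

context thsetup
begin

lemma Theta_ind_pos:
  assumes D: "compact D" and c: "c \<in> D"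
  shows "Theta N \<Gamma> (\<lambda>g. if g \<in> set_plus_grp N D then 1 else 0) c \<noteq> (0::complex)"
proof -
  define \<psi> :: "'g \<Rightarrow> complex" where "\<psi> = (\<lambda>g. if g \<in> set_plus_grp N D then 1 else 0)"
  obtain V where V: "is_subgroup V" "open V" "\<forall>\<gamma>\<in>\<Gamma>. \<gamma> \<in> set_plus_grp N V \<longrightarrow> \<gamma> \<in> N"
    using sep by blast
  let ?I = "coset_of (\<Gamma> \<inter> N) ` \<Gamma>"
  define F where "F = {C \<in> ?I. rep C \<in> set_plus_grp N (set_plus_grp D {- c})}"
  have Ffin: "finite F" unfolding F_def
    by (rule fin[OF V]) (intro compact_set_plus D compact_sing)
  have van: "\<psi> (rep C + c) = 0" if "C \<in> ?I" "C \<notin> F" for C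
  proof (rule ccontr)
    assume "\<psi> (rep C + c) \<noteq> 0"
    then have "rep C + c \<in> set_plus_grp N D" unfolding \<psi>_def by (simp split: if_splits)
    then obtain n d where nd: "n \<in> N" "d \<in> D" "rep C + c = n + d" by (elim set_plus_grpE)
    have e: "rep C = n + (d + - c)"
    proof -
      have "rep C = (rep C + c) + - c" by (simp only: add.assoc right_minus add_0_right)
      also have "\<dots> = n + (d + - c)" unfolding nd(3) by (simp only: add.assoc)
      finally show ?thesis .
    qed
    have "d + - c \<in> set_plus_grp D {- c}" using nd(2) by (rule set_plus_grpI) simp
    then have "rep C \<in> set_plus_grp N (set_plus_grp D {- c})"
      unfolding e by (rule set_plus_grpI[OF nd(1)])
    then show False using that unfolding F_def by blast
  qed
  have "Theta N \<Gamma> \<psi> c = (\<Sum>\<^sub>\<infinity>C\<in>?I. \<psi> (rep C + c))" by (rule Theta_alt)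
  also have "\<dots> = (\<Sum>\<^sub>\<infinity>C\<in>F. \<psi> (rep C + c))"
  proof (rule infsum_cong_neutral)
    fix C assume "C \<in> F - ?I" then show "\<psi> (rep C + c) = 0" unfolding F_def by blast
  next
    fix C assume "C \<in> ?I - F" then show "\<psi> (rep C + c) = 0" using van by blast
  qed simp
  also have "\<dots> = (\<Sum>C\<in>F. \<psi> (rep C + c))" using Ffin by (rule infsum_finite)
  finally have T: "Theta N \<Gamma> \<psi> c = (\<Sum>C\<in>F. \<psi> (rep C + c))" .
  define C0 where "C0 = coset_of (\<Gamma> \<inter> N) 0"
  have C0I: "C0 \<in> ?I" unfolding C0_def using sg0[OF Gs] by (rule imageI)
  obtain h where h: "h \<in> \<Gamma> \<inter> N" "rep C0 = 0 + h" using rep_coset[OF Hs] unfolding C0_def by blast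
  have hN: "h \<in> N" using h(1) by blast
  have "rep C0 + c \<in> set_plus_grp N D" unfolding h(2) add_0_left using hN c by (rule set_plus_grpI)
  then have p1: "\<psi> (rep C0 + c) = 1" unfolding \<psi>_def by simp
  have C0F: "C0 \<in> F"
  proof (rule ccontr)
    assume "C0 \<notin> F"
    then have "\<psi> (rep C0 + c) = 0" using van C0I by blast
    then show False using p1 by simp
  qed
  have "Re (\<psi> (rep C0 + c)) \<le> (\<Sum>C\<in>F. Re (\<psi> (rep C + c)))"
    by (rule member_le_sum[OF C0F _ Ffin]) (simp add: \<psi>_def)
  then have "1 \<le> Re (Theta N \<Gamma> \<psi> c)" unfolding T Re_sum p1 by simp
  then show ?thesis unfolding \<psi>_def by auto
qed

end

theorem lemma4p22:
  fixes N \<Gamma> :: "'g::topological_group_add set"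
    and chi chi' :: "'g \<Rightarrow> complex"
  assumes "l_group TYPE('g)"
    and "closed N" and "is_normal_subgroup N"
    and "character N chi"
    and "is_subgroup \<Gamma>" and "discrete \<Gamma>"
    and "\<forall>x\<in>\<Gamma> \<inter> N. chi x = 1"
    and "discrete_image_mod N \<Gamma>"
    and "\<forall>\<gamma>\<in>\<Gamma>. \<forall>n\<in>N. chi (\<gamma> + n - \<gamma>) = chi n"
    and "character (set_plus_grp \<Gamma> N) chi'"
    and "\<forall>\<gamma>\<in>\<Gamma>. chi' \<gamma> = 1"
    and "\<forall>n\<in>N. chi' n = chi n"
  shows "Theta N \<Gamma> ` Ind N chi = Ind (set_plus_grp \<Gamma> N) chi'"
proof -
  interpret thsetup N \<Gamma>
    by unfold_locales (fact assms(1), fact assms(3), fact assms(5), fact assms(8))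
  have mult': "\<forall>x\<in>set_plus_grp \<Gamma> N. \<forall>y\<in>set_plus_grp \<Gamma> N. chi' (x + y) = chi' x * chi' y"
    using assms(10) unfolding character_def by blast
  show ?thesis
  proof (rule subset_antisym)
    show "Theta N \<Gamma> ` Ind N chi \<subseteq> Ind (set_plus_grp \<Gamma> N) chi'"
    proof
      fix f assume "f \<in> Theta N \<Gamma> ` Ind N chi"
      then obtain \<phi> where \<phi>: "\<phi> \<in> Ind N chi" "f = Theta N \<Gamma> \<phi>" by blast
      show "f \<in> Ind (set_plus_grp \<Gamma> N) chi'" unfolding \<phi>(2)
        by (rule Theta_in_Ind[OF assms(7) assms(9) mult' assms(11) assms(12) \<phi>(1)])
    qed
  next
    show "Ind (set_plus_grp \<Gamma> N) chi' \<subseteq> Theta N \<Gamma> ` Ind N chi"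
    proof
      fix f assume f: "f \<in> Ind (set_plus_grp \<Gamma> N) chi'"
      have flc: "locally_constant f" using f unfolding Ind_def by blast
      have feq: "\<And>h g. h \<in> set_plus_grp \<Gamma> N \<Longrightarrow> f (h + g) = chi' h * f g"
        using f unfolding Ind_def by blast
      obtain C1 where C1: "compact C1" "{x. f x \<noteq> 0} \<subseteq> set_plus_grp (set_plus_grp \<Gamma> N) C1"
        using f unfolding Ind_def by blast
      have "\<exists>K::'g set. is_subgroup K \<and> compact K \<and> open K \<and> K \<subseteq> UNIV"
        using assms(1)[unfolded l_group_def, rule_format, of UNIV] by simp
      then obtain K :: "'g set" where K: "is_subgroup K" "compact K" "open K" by blast
      have "C1 \<subseteq> (\<Union>c\<in>C1. (\<lambda>x. c + x) ` K)"
      proof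
        fix d assume "d \<in> C1"
        moreover have "d \<in> (\<lambda>x. d + x) ` K" using sg0[OF K(1)] by (rule rev_image_eqI) simp
        ultimately show "d \<in> (\<Union>c\<in>C1. (\<lambda>x. c + x) ` K)" by blast
      qed
      then obtain E where E: "E \<subseteq> C1" "finite E" "C1 \<subseteq> (\<Union>e\<in>E. (\<lambda>x. e + x) ` K)"
        using compactE_image[OF C1(1), where f="\<lambda>d. (\<lambda>x. d + x) ` K" and C=C1] open_translate[OF K(3)]
        by metis
      define D where "D = (\<Union>e\<in>E. (\<lambda>x. e + x) ` K)"
      have Dc: "compact D" unfolding D_def using E(2) compact_translate[OF K(2)] by blast
      have C1D: "C1 \<subseteq> D" unfolding D_def by (rule E(3))
      define \<psi> :: "'g \<Rightarrow> complex" where "\<psi> = (\<lambda>g. if g \<in> set_plus_grp N D then 1 else 0)"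

      have Dopen: "open D" unfolding D_def by (intro open_UN ballI open_translate K(3))
      have NDeq: "set_plus_grp N D = (\<Union>n\<in>N. (\<lambda>x. n + x) ` D)"
      proof (intro set_eqI iffI)
        fix x assume "x \<in> set_plus_grp N D"
        then obtain n d where "n \<in> N" "d \<in> D" "x = n + d" by (elim set_plus_grpE)
        then show "x \<in> (\<Union>n\<in>N. (\<lambda>x. n + x) ` D)" by blast
      next
        fix x assume "x \<in> (\<Union>n\<in>N. (\<lambda>x. n + x) ` D)"
        then obtain n d where "n \<in> N" "d \<in> D" "x = n + d" by blast
        then show "x \<in> set_plus_grp N D" by (simp add: set_plus_grpI)
      qed
      have NDopen: "open (set_plus_grp N D)" unfolding NDeq
        by (intro open_UN ballI open_translate Dopen)
      have psilc: "locally_constant \<psi>" unfolding locally_constant_def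
      proof
        fix x show "\<exists>U. open U \<and> x \<in> U \<and> (\<forall>y\<in>U. \<psi> y = \<psi> x)"
        proof (cases "x \<in> set_plus_grp N D")
          case True
          then show ?thesis using NDopen unfolding \<psi>_def by (intro exI[of _ "set_plus_grp N D"]) simp
        next
          case False
          have "open ((\<lambda>z. x + z) ` K)" by (rule open_translate[OF K(3)])
          moreover have "x \<in> (\<lambda>z. x + z) ` K" using sg0[OF K(1)] by (rule rev_image_eqI) simp
          moreover have "\<forall>y\<in>(\<lambda>z. x + z) ` K. \<psi> y = \<psi> x"
          proof
            fix y assume "y \<in> (\<lambda>z. x + z) ` K"
            then obtain k where k: "k \<in> K" "y = x + k" by blast
            have "y \<notin> set_plus_grp N D"
            proof
              assume "y \<in> set_plus_grp N D"
              then obtain n d where nd: "n \<in> N" "d \<in> D" "y = n + d" by (elim set_plus_grpE)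
              from nd(2) obtain e k' where ek: "e \<in> E" "k' \<in> K" "d = e + k'" unfolding D_def by blast
              have xe: "x = n + (e + (k' + - k))"
              proof -
                have "x = (x + k) + - k" by (simp only: add.assoc right_minus add_0_right)
                also have "\<dots> = n + (e + (k' + - k))"
                  unfolding k(2)[symmetric] nd(3) ek(3) by (simp only: add.assoc)
                finally show ?thesis .
              qed
              have "k' + - k \<in> K" using sgadd[OF K(1) ek(2) sgminus[OF K(1) k(1)]] .
              then have "e + (k' + - k) \<in> D" unfolding D_def by (rule UN_I[OF ek(1) imageI])
              then have "x \<in> set_plus_grp N D" unfolding xe by (rule set_plus_grpI[OF nd(1)])
              then show False using False by contradiction
            qed
            then show "\<psi> y = \<psi> x" using False unfolding \<psi>_def by simp
          qed
          ultimately show ?thesis by blast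
        qed
      qed
      have memiff: "n + g \<in> set_plus_grp N D \<longleftrightarrow> g \<in> set_plus_grp N D" if n: "n \<in> N" for n g
      proof
        assume "n + g \<in> set_plus_grp N D"
        then obtain n' d where nd: "n' \<in> N" "d \<in> D" "n + g = n' + d" by (elim set_plus_grpE)
        have "g = - n + (n + g)" by (simp only: minus_add_cancel)
        also have "\<dots> = (- n + n') + d" unfolding nd(3) by (simp only: add.assoc)
        finally have ge: "g = (- n + n') + d" .
        have "- n + n' \<in> N" using sgadd[OF Ns sgminus[OF Ns n] nd(1)] .
        then show "g \<in> set_plus_grp N D" unfolding ge using nd(2) by (rule set_plus_grpI)
      next
        assume "g \<in> set_plus_grp N D"
        then obtain n' d where nd: "n' \<in> N" "d \<in> D" "g = n' + d" by (elim set_plus_grpE)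
        have ge: "n + g = (n + n') + d" unfolding nd(3) by (simp only: add.assoc)
        have "n + n' \<in> N" using sgadd[OF Ns n nd(1)] .
        then show "n + g \<in> set_plus_grp N D" unfolding ge using nd(2) by (rule set_plus_grpI)
      qed
      have psieq: "\<forall>n\<in>N. \<forall>g. \<psi> (n + g) = (\<lambda>_. 1) n * \<psi> g"
        using memiff unfolding \<psi>_def by simp
      have psisupp: "{x. \<psi> x \<noteq> 0} \<subseteq> set_plus_grp N D" unfolding \<psi>_def by auto
      have psiInd: "\<psi> \<in> Ind N (\<lambda>_. 1)" unfolding Ind_def using psilc psieq Dc psisupp by blast
      define S where "S = Theta N \<Gamma> \<psi>"
      have SInd: "S \<in> Ind (set_plus_grp \<Gamma> N) (\<lambda>_. 1)" unfolding S_def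
        by (rule Theta_in_Ind[OF _ _ _ _ _ psiInd]) simp_all
      have Slc: "locally_constant S" using SInd unfolding Ind_def by blast
      have Seq: "\<And>h g. h \<in> set_plus_grp \<Gamma> N \<Longrightarrow> S (h + g) = S g"
        using SInd unfolding Ind_def by simp
      define \<phi> where "\<phi> = (\<lambda>x. f x * \<psi> x / S x)"
      have "locally_constant (\<lambda>x. f x * \<psi> x)" by (rule lc2[OF flc psilc])
      then have philc: "locally_constant \<phi>" unfolding \<phi>_def by (rule lc2[OF _ Slc])
      have phieq: "\<forall>n\<in>N. \<forall>g. \<phi> (n + g) = chi n * \<phi> g"
      proof (intro ballI allI)
        fix n g assume n: "n \<in> N"
        have nG: "n \<in> set_plus_grp \<Gamma> N" using set_plus_grpI[OF sg0[OF Gs] n] by simp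
        have "f (n + g) = chi n * f g" using feq[OF nG] assms(12) n by simp
        moreover have "\<psi> (n + g) = \<psi> g" using psieq n by simp
        moreover have "S (n + g) = S g" using Seq[OF nG] .
        ultimately show "\<phi> (n + g) = chi n * \<phi> g" unfolding \<phi>_def by simp
      qed
      have phisupp: "{x. \<phi> x \<noteq> 0} \<subseteq> set_plus_grp N D"
      proof
        fix x assume "x \<in> {x. \<phi> x \<noteq> 0}"
        then have "\<psi> x \<noteq> 0" unfolding \<phi>_def by auto
        then show "x \<in> set_plus_grp N D" using psisupp by blast
      qed
      have phiInd: "\<phi> \<in> Ind N chi" unfolding Ind_def using philc phieq Dc phisupp by blast
      have "Theta N \<Gamma> \<phi> = f"
      proof
        fix g
        let ?I = "coset_of (\<Gamma> \<inter> N) ` \<Gamma>"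
        have "Theta N \<Gamma> \<phi> g = (\<Sum>\<^sub>\<infinity>C\<in>?I. (f g / S g) * \<psi> (rep C + g))"
          unfolding Theta_alt
        proof (rule infsum_cong)
          fix C assume C: "C \<in> ?I"
          have rG: "rep C \<in> set_plus_grp \<Gamma> N" using set_plus_grpI[OF repI(1)[OF C] sg0[OF Ns]] by simp
          have "f (rep C + g) = f g" using feq[OF rG] assms(11) repI(1)[OF C] by simp
          moreover have "S (rep C + g) = S g" using Seq[OF rG] .
          ultimately show "\<phi> (rep C + g) = (f g / S g) * \<psi> (rep C + g)" unfolding \<phi>_def by simp
        qed
        also have "\<dots> = (f g / S g) * S g" unfolding S_def Theta_alt by (rule infsum_cmult_right')
        also have "\<dots> = f g"
        proof (cases "S g = 0")
          case False then show ?thesis by simp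
        next
          case True
          have "f g = 0"
          proof (rule ccontr)
            assume "f g \<noteq> 0"
            then have "g \<in> set_plus_grp (set_plus_grp \<Gamma> N) C1" using C1(2) by blast
            then obtain h c where hc: "h \<in> set_plus_grp \<Gamma> N" "c \<in> C1" "g = h + c" by (rule set_plus_grpE)
            have cD: "c \<in> D" using hc(2) C1D by blast
            have "S g = S c" unfolding hc(3) by (rule Seq[OF hc(1)])
            moreover have "S c \<noteq> 0" unfolding S_def \<psi>_def by (rule Theta_ind_pos[OF Dc cD])
            ultimately show False using True by simp
          qed
          then show ?thesis by simp
        qed
        finally show "Theta N \<Gamma> \<phi> g = f g" .
      qed
      then show "f \<in> Theta N \<Gamma> ` Ind N chi" using phiInd by blast
    qed
  qed
qed



end
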